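(* Let $\varphi:A\to B$ be a continuous unital algebra homomorphism between unital Banach algebras which admits a continuous linear section $s:B\to A$, $\varphi\circ s=1_B$. Then for every $n\ge1$ the induced group homomorphism $\varphi(\Delta):GL(C^2_0(\Delta^n,A))\to GL(C^2_0(\Delta^n,B))$, $\sigma\mapsto\varphi\circ\sigma$, is surjective.
   Context: $\Delta^n=\{t\in[0,1]^n:\sum t_i\le1\}$, $\mathbf 0$ its origin vertex; $C^2(\Delta^n,A)$ the Banach algebra of $C^2$ maps $\Delta^n\to A$ (norm: sup norm plus sup norms of first and second partial derivatives); for a unital ring $R$, $GL(R)=\bigcup_mGL_m(R)$; $GL(C^2_0(\Delta^n,A))=\{\sigma\in GL(C^2(\Delta^n,A)):\sigma(\mathbf 0)=1\}$. *)

theory Defs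
  imports "HOL-Analysis.Analysis"
begin

definition std_simplex :: "(real ^ 'n) set" where
  "std_simplex = {t. (\<forall>i. 0 \<le> t $ i) \<and> (\<Sum>i\<in>UNIV. t $ i) \<le> 1}"

definition C2_on :: "(real ^ 'n) set \<Rightarrow> (real ^ 'n \<Rightarrow> 'a::real_normed_vector) \<Rightarrow> bool" where
  "C2_on S f \<longleftrightarrow>
     (\<exists>f' :: real ^ 'n \<Rightarrow> ((real ^ 'n) \<Rightarrow>\<^sub>L 'a).
      \<exists>f'' :: real ^ 'n \<Rightarrow> ((real ^ 'n) \<Rightarrow>\<^sub>L ((real ^ 'n) \<Rightarrow>\<^sub>L 'a)).
        (\<forall>x\<in>S. (f has_derivative blinfun_apply (f' x)) (at x within S)) \<and>
        continuous_on S f' \<and>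
        (\<forall>x\<in>S. (f' has_derivative blinfun_apply (f'' x)) (at x within S)) \<and>
        continuous_on S f'')"

text \<open>GL_m(C^2_0(\<Delta>^n, A)): m x m matrices (entries indexed by i, j < m) of C^2 maps
  \<Delta>^n \<rightarrow> A, invertible in the matrix ring over C^2(\<Delta>^n, A), with value the identity matrix
  at the origin vertex.\<close>
definition GL0_C2 :: "nat \<Rightarrow> (nat \<Rightarrow> nat \<Rightarrow> real ^ 'n \<Rightarrow> 'a::real_normed_algebra_1) set" where
  "GL0_C2 m = {\<sigma>.
     (\<forall>i<m. \<forall>j<m. C2_on std_simplex (\<sigma> i j)) \<and>
     (\<forall>i<m. \<forall>j<m. \<sigma> i j 0 = (if i = j then 1 else 0)) \<and>
     (\<exists>\<tau>. (\<forall>i<m. \<forall>j<m. C2_on std_simplex (\<tau> i j)) \<and>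
          (\<forall>x\<in>std_simplex. \<forall>i<m. \<forall>j<m.
              (\<Sum>k<m. \<sigma> i k x * \<tau> k j x) = (if i = j then 1 else 0) \<and>
              (\<Sum>k<m. \<tau> i k x * \<sigma> k j x) = (if i = j then 1 else 0)))}"

end

theory Submission
  imports Defs
begin

definition C1w :: "('v::real_normed_vector) set \<Rightarrow> ('v \<Rightarrow> 'a::real_normed_vector) \<Rightarrow> ('v \<Rightarrow> ('v \<Rightarrow>\<^sub>L 'a)) \<Rightarrow> bool" where
  "C1w S f f' \<longleftrightarrow> (\<forall>x\<in>S. (f has_derivative blinfun_apply (f' x)) (at x within S)) \<and> continuous_on S f'"

lemma C2_on_iff: "C2_on S f \<longleftrightarrow> (\<exists>f' f''. C1w S f f' \<and> C1w S f' f'')"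
  by (auto simp: C2_on_def C1w_def)

lemma C1w_cont: "C1w S f f' \<Longrightarrow> continuous_on S f"
  unfolding C1w_def continuous_on_eq_continuous_within
  by (auto intro: has_derivative_continuous)

lemma C1w_const: "C1w S (\<lambda>x. c) (\<lambda>x. 0)"
  by (simp add: C1w_def zero_blinfun.rep_eq)

lemma C1w_add: "C1w S f f' \<Longrightarrow> C1w S g g' \<Longrightarrow> C1w S (\<lambda>x. f x + g x) (\<lambda>x. f' x + g' x)"
  unfolding C1w_def by (auto intro!: has_derivative_add continuous_on_add simp: plus_blinfun.rep_eq)

lemma C1w_bilinear:
  assumes B: "bounded_bilinear B" and f: "C1w S f f'" and g: "C1w S g g'"
  shows "C1w S (\<lambda>x. B (f x) (g x))
     (\<lambda>x. (bounded_bilinear.prod_right B (f x) o\<^sub>L g' x) + (bounded_bilinear.prod_left B (g x) o\<^sub>L f' x))"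
proof -
  interpret B: bounded_bilinear B by fact
  have cf: "continuous_on S f" and cg: "continuous_on S g" using f g by (auto intro: C1w_cont)
  show ?thesis unfolding C1w_def
  proof safe
    fix x assume "x \<in> S"
    then have "((\<lambda>x. B (f x) (g x)) has_derivative (\<lambda>h. B (f x) (g' x h) + B (f' x h) (g x))) (at x within S)"
      using f g unfolding C1w_def by (auto intro!: B.FDERIV)
    then show "((\<lambda>x. B (f x) (g x)) has_derivative
       blinfun_apply ((B.prod_right (f x) o\<^sub>L g' x) + (B.prod_left (g x) o\<^sub>L f' x))) (at x within S)"
      by (rule has_derivative_eq_rhs) (auto simp: plus_blinfun.rep_eq B.prod_right.rep_eq B.prod_left.rep_eq)
  next
    have "continuous_on S (\<lambda>x. B.prod_right (f x))"
      by (rule bounded_linear.continuous_on[OF B.bounded_linear_prod_right cf])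
    moreover have "continuous_on S (\<lambda>x. B.prod_left (g x))"
      by (rule bounded_linear.continuous_on[OF B.bounded_linear_prod_left cg])
    ultimately show "continuous_on S (\<lambda>x. (B.prod_right (f x) o\<^sub>L g' x) + (B.prod_left (g x) o\<^sub>L f' x))"
      using f g unfolding C1w_def
      by (intro continuous_on_add bounded_bilinear.continuous_on[OF bounded_bilinear_blinfun_compose]) auto
  qed
qed

lemma C1w_linear:
  assumes L: "bounded_linear L" and f: "C1w S f f'"
  shows "C1w S (\<lambda>x. L (f x)) (\<lambda>x. Blinfun L o\<^sub>L f' x)"
  using f unfolding C1w_def
  by (auto intro!: has_derivative_eq_rhs[OF bounded_linear.has_derivative[OF L]] bounded_bilinear.continuous_on[OF bounded_bilinear_blinfun_compose]
       continuous_on_const simp: bounded_linear_Blinfun_apply[OF L] o_def)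

lemma C1w_scale_compose:
  assumes f: "C1w T f f'" and ST: "\<And>x. x \<in> S \<Longrightarrow> c *\<^sub>R x \<in> T"
  shows "C1w S (\<lambda>x. f (c *\<^sub>R x)) (\<lambda>x. c *\<^sub>R f' (c *\<^sub>R x))"
  unfolding C1w_def
proof safe
  fix x assume x: "x \<in> S"
  have d1: "((\<lambda>x. c *\<^sub>R x) has_derivative (\<lambda>h. c *\<^sub>R h)) (at x within S)"
    by (auto intro!: derivative_eq_intros)
  have "(f has_derivative blinfun_apply (f' (c *\<^sub>R x))) (at (c *\<^sub>R x) within T)"
    using f x ST unfolding C1w_def by auto
  then have d2: "(f has_derivative blinfun_apply (f' (c *\<^sub>R x))) (at (c *\<^sub>R x) within ((\<lambda>x. c *\<^sub>R x) ` S))"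
    by (rule has_derivative_subset) (auto intro: ST)
  have "((\<lambda>x. f (c *\<^sub>R x)) has_derivative (\<lambda>h. f' (c *\<^sub>R x) (c *\<^sub>R h))) (at x within S)"
    by (rule has_derivative_in_compose[OF d1 d2])
  then show "((\<lambda>x. f (c *\<^sub>R x)) has_derivative blinfun_apply (c *\<^sub>R f' (c *\<^sub>R x))) (at x within S)"
    by (simp add: scaleR_blinfun.rep_eq blinfun.scaleR_right)
next
  have "continuous_on S (\<lambda>x. f' (c *\<^sub>R x))"
    using f unfolding C1w_def
    by (intro continuous_on_compose2[where f = "\<lambda>x. c *\<^sub>R x" and g = f' and t = T])
       (auto intro!: continuous_intros ST)
  then show "continuous_on S (\<lambda>x. c *\<^sub>R f' (c *\<^sub>R x))"
    by (intro continuous_intros)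
qed

definition C1_on :: "('v::real_normed_vector) set \<Rightarrow> ('v \<Rightarrow> 'a::real_normed_vector) \<Rightarrow> bool" where
  "C1_on S f \<longleftrightarrow> (\<exists>f'. C1w S f f')"

lemma C2_on_iff2: "C2_on S f \<longleftrightarrow> (\<exists>f'. C1w S f f' \<and> C1_on S f')"
  by (auto simp: C2_on_iff C1_on_def)

lemma C1_onI: "C1w S f f' \<Longrightarrow> C1_on S f"
  unfolding C1_on_def by (rule exI)

lemma C1_onE: assumes "C1_on S f" obtains f' where "C1w S f f'"
  using assms unfolding C1_on_def by (elim exE)

lemma C1_on_const: "C1_on S (\<lambda>x. c)"
  by (rule C1_onI[OF C1w_const])

lemma C1_on_add: assumes "C1_on S f" "C1_on S g" shows "C1_on S (\<lambda>x. f x + g x)"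
proof -
  obtain f' g' where "C1w S f f'" "C1w S g g'" using assms by (elim C1_onE)
  then show ?thesis by (intro C1_onI[OF C1w_add])
qed

lemma C1_on_bilinear: assumes "bounded_bilinear B" "C1_on S f" "C1_on S g" shows "C1_on S (\<lambda>x. B (f x) (g x))"
proof -
  obtain f' g' where "C1w S f f'" "C1w S g g'" using assms by (elim C1_onE)
  then show ?thesis by (intro C1_onI[OF C1w_bilinear[OF assms(1)]])
qed

lemma C1_on_linear: assumes "bounded_linear L" "C1_on S f" shows "C1_on S (\<lambda>x. L (f x))"
proof -
  obtain f' where "C1w S f f'" using assms by (elim C1_onE)
  then show ?thesis by (intro C1_onI[OF C1w_linear[OF assms(1)]])
qed

lemma C1_on_neg: "C1_on S f \<Longrightarrow> C1_on S (\<lambda>x. - f x)"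
  by (rule C1_on_linear[OF bounded_linear_minus[OF bounded_linear_ident]])

lemma C1_on_sum: "finite I \<Longrightarrow> (\<And>i. i \<in> I \<Longrightarrow> C1_on S (f i)) \<Longrightarrow> C1_on S (\<lambda>x. \<Sum>i\<in>I. f i x)"
proof (induction I rule: finite_induct)
  case empty then show ?case by (simp add: C1_on_const)
next
  case (insert a I) then show ?case by (simp add: C1_on_add)
qed

lemma C1_on_cont: "C1_on S f \<Longrightarrow> continuous_on S f"
  by (elim C1_onE C1w_cont)

lemma C2_onI: "C1w S f f' \<Longrightarrow> C1_on S f' \<Longrightarrow> C2_on S f"
  unfolding C2_on_iff2 by (intro exI conjI)

lemma C2_onE: assumes "C2_on S f" obtains f' where "C1w S f f'" "C1_on S f'"
  using assms unfolding C2_on_iff2 by (elim exE conjE)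

lemma C2_on_C1: "C2_on S f \<Longrightarrow> C1_on S f"
  by (elim C2_onE C1_onI)

lemma C2_on_cont: "C2_on S f \<Longrightarrow> continuous_on S f"
  by (intro C1_on_cont C2_on_C1)

lemma C2_on_const: "C2_on S (\<lambda>x. c)"
  by (rule C2_onI[OF C1w_const C1_on_const])

lemma C2_on_add: assumes "C2_on S f" "C2_on S g" shows "C2_on S (\<lambda>x. f x + g x)"
proof -
  obtain f' g' where "C1w S f f'" "C1_on S f'" "C1w S g g'" "C1_on S g'" using assms by (elim C2_onE)
  then show ?thesis by (intro C2_onI[OF C1w_add] C1_on_add)
qed

lemma C2_on_bilinear:
  assumes B: "bounded_bilinear B" and f: "C2_on S f" and g: "C2_on S g"
  shows "C2_on S (\<lambda>x. B (f x) (g x))"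
proof -
  interpret B: bounded_bilinear B by fact
  obtain f' where f1: "C1w S f f'" and f2: "C1_on S f'" using f by (elim C2_onE)
  obtain g' where g1: "C1w S g g'" and g2: "C1_on S g'" using g by (elim C2_onE)
  have f0: "C1_on S f" and g0: "C1_on S g" using f1 g1 by (auto intro: C1_onI)
  have "C1_on S (\<lambda>x. (B.prod_right (f x) o\<^sub>L g' x) + (B.prod_left (g x) o\<^sub>L f' x))"
    by (intro C1_on_add C1_on_bilinear[OF bounded_bilinear_blinfun_compose]
        C1_on_linear[OF B.bounded_linear_prod_right] C1_on_linear[OF B.bounded_linear_prod_left] f0 g0 f2 g2)
  then show ?thesis
    by (intro C2_onI[OF C1w_bilinear[OF B f1 g1]])
qed

lemma C2_on_linear:
  assumes L: "bounded_linear L" and f: "C2_on S f"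
  shows "C2_on S (\<lambda>x. L (f x))"
proof -
  obtain f' where f1: "C1w S f f'" and f2: "C1_on S f'" using f by (elim C2_onE)
  have "C1_on S (\<lambda>x. Blinfun L o\<^sub>L f' x)"
    by (rule C1_on_linear[OF bounded_bilinear.bounded_linear_right[OF bounded_bilinear_blinfun_compose] f2])
  then show ?thesis by (intro C2_onI[OF C1w_linear[OF L f1]])
qed

lemma C2_on_neg: "C2_on S f \<Longrightarrow> C2_on S (\<lambda>x. - f x)"
  by (rule C2_on_linear[OF bounded_linear_minus[OF bounded_linear_ident]])

lemma C2_on_diff: "C2_on S f \<Longrightarrow> C2_on S g \<Longrightarrow> C2_on S (\<lambda>x. f x - g x)"
  using C2_on_add[OF _ C2_on_neg[of S g]] by (simp add: diff_conv_add_uminus del: add_uminus_conv_diff)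

lemma C2_on_mult: "C2_on S (f::_\<Rightarrow>'a::real_normed_algebra) \<Longrightarrow> C2_on S g \<Longrightarrow> C2_on S (\<lambda>x. f x * g x)"
  by (rule C2_on_bilinear[OF bounded_bilinear_mult])
lemma C2_on_sum: "finite I \<Longrightarrow> (\<And>i. i \<in> I \<Longrightarrow> C2_on S (f i)) \<Longrightarrow> C2_on S (\<lambda>x. \<Sum>i\<in>I. f i x)"
proof (induction I rule: finite_induct)
  case empty then show ?case by (simp add: C2_on_const)
next
  case (insert a I) then show ?case by (simp add: C2_on_add)
qed

lemma C2_on_scale_compose:
  assumes f: "C2_on T f" and ST: "\<And>x. x \<in> S \<Longrightarrow> c *\<^sub>R x \<in> T"
  shows "C2_on S (\<lambda>x. f (c *\<^sub>R x))"
proof -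
  obtain f' f'' where f1: "C1w T f f'" and f2: "C1w T f' f''" using f unfolding C2_on_iff by blast
  have "C1_on S (\<lambda>x. c *\<^sub>R f' (c *\<^sub>R x))"
  proof -
    have "C1_on S (\<lambda>x. f' (c *\<^sub>R x))" unfolding C1_on_def using C1w_scale_compose[OF f2 ST] by blast
    then show ?thesis by (rule C1_on_linear[OF bounded_linear_scaleR_right])
  qed
  then show ?thesis unfolding C2_on_iff2
    by (intro exI[of _ "\<lambda>x. c *\<^sub>R f' (c *\<^sub>R x)"] conjI C1w_scale_compose[OF f1 ST])
qed


lemma bilinear_zero_deriv:
  assumes B: "bounded_bilinear B" and f: "continuous (at x within S) f"
    and g: "(g has_derivative g') (at x within S)" and g0: "g x = 0"
  shows "((\<lambda>y. B (f y) (g y)) has_derivative (\<lambda>h. B (f x) (g' h))) (at x within S)"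
proof -
  interpret B: bounded_bilinear B by fact
  interpret G: bounded_linear g' by (rule has_derivative_bounded_linear[OF g])
  obtain K where K: "0 < K" and nB: "\<And>a b. norm (B a b) \<le> norm a * norm b * K"
    using B.pos_bounded by blast
  obtain KG where KG: "0 \<le> KG" and nG: "\<And>h. norm (g' h) \<le> norm h * KG"
    using G.nonneg_bounded by blast
  define Ng where "Ng = (\<lambda>y. norm (g y - g x - g' (y - x)) / norm (y - x))"
  define H where "H = (\<lambda>y. norm (f x) * Ng y * K + norm (f y - f x) * (Ng y + KG) * K)"
  show ?thesis
  proof (rule has_derivativeI_sandwich[of 1 _ _ _ _ H])
    show "bounded_linear (\<lambda>h. B (f x) (g' h))"
      by (intro bounded_linear_compose[OF B.bounded_linear_right] G.bounded_linear)
  next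
    fix y assume "y \<in> S" "y \<noteq> x" "dist y x < 1"
    define e where "e = y - x"
    define Dg where "Dg = g y - g x - g' e"
    have n: "norm e > 0" using \<open>y \<noteq> x\<close> by (simp add: e_def)
    have eq: "B (f y) (g y) - B (f x) (g x) - B (f x) (g' e) = B (f x) Dg + B (f y - f x) (g y)"
      by (simp add: Dg_def g0 B.diff_left B.diff_right B.zero_right)
    have gy: "norm (g y) \<le> norm Dg + norm e * KG"
    proof -
      have "g y = Dg + g' e" by (simp add: Dg_def g0)
      then have "norm (g y) \<le> norm Dg + norm (g' e)" by (metis norm_triangle_ineq)
      then show ?thesis using nG[of e] by linarith
    qed
    have "norm (B (f y) (g y) - B (f x) (g x) - B (f x) (g' e))
        \<le> norm (f x) * norm Dg * K + norm (f y - f x) * (norm Dg + norm e * KG) * K"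
    proof -
      have "norm (B (f y) (g y) - B (f x) (g x) - B (f x) (g' e)) \<le> norm (B (f x) Dg) + norm (B (f y - f x) (g y))"
        unfolding eq by (rule norm_triangle_ineq)
      also have "\<dots> \<le> norm (f x) * norm Dg * K + norm (f y - f x) * norm (g y) * K"
        by (intro add_mono nB)
      also have "\<dots> \<le> norm (f x) * norm Dg * K + norm (f y - f x) * (norm Dg + norm e * KG) * K"
        using gy K by (intro add_mono order_refl mult_right_mono mult_left_mono) auto
      finally show ?thesis .
    qed
    then have "norm (B (f y) (g y) - B (f x) (g x) - B (f x) (g' e)) / norm e
        \<le> (norm (f x) * norm Dg * K + norm (f y - f x) * (norm Dg + norm e * KG) * K) / norm e"
      using n by (intro divide_right_mono) auto
    also have "\<dots> = H y"
      using n by (simp add: H_def Ng_def Dg_def e_def field_simps)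
    finally show "norm (B (f y) (g y) - B (f x) (g x) - B (f x) (g' (y - x))) / norm (y - x) \<le> H y"
      by (simp add: e_def)
  next
    have "(Ng \<longlongrightarrow> 0) (at x within S)"
      using g unfolding has_derivative_iff_norm Ng_def by simp
    moreover have "((\<lambda>y. f y - f x) \<longlongrightarrow> 0) (at x within S)"
      using f unfolding continuous_within by (simp add: LIM_zero)
    ultimately have "(H \<longlongrightarrow> norm (f x) * 0 * K + 0 * (0 + KG) * K) (at x within S)"
      unfolding H_def by (intro tendsto_intros) (auto simp: tendsto_norm_zero)
    then show "(H \<longlongrightarrow> 0) (at x within S)" by simp
  qed simp
qed

lemma if01_mult: "(if P then 1 else 0) * (a::'a::ring_1) = (if P then a else 0)" by simp
lemma mult_if01: "(a::'a::ring_1) * (if P then 1 else 0) = (if P then a else 0)" by simp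

lemma inv_ident:
  fixes F G :: "nat \<Rightarrow> nat \<Rightarrow> 'v \<Rightarrow> 'a::ring_1"
  assumes r: "\<And>i j. i<m \<Longrightarrow> j<m \<Longrightarrow> (\<Sum>k<m. F i k x * G k j x) = (if i=j then 1 else 0)"
    and l: "\<And>i j. i<m \<Longrightarrow> j<m \<Longrightarrow> (\<Sum>k<m. G i k y * F k j y) = (if i=j then 1 else 0)"
    and ij: "i < m" "j < m"
  shows "G i j y = G i j x - (\<Sum>k<m. \<Sum>l<m. G i k y * ((F k l y - F k l x) * G l j x))"
proof -
  have A: "(\<Sum>k<m. \<Sum>l<m. G i k y * (F k l y * G l j x)) = G i j x"
  proof -
    have "(\<Sum>k<m. \<Sum>l<m. G i k y * (F k l y * G l j x)) = (\<Sum>l<m. (\<Sum>k<m. G i k y * F k l y) * G l j x)"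
      by (subst sum.swap) (simp add: sum_distrib_right mult.assoc)
    also have "\<dots> = (\<Sum>l<m. (if i = l then 1 else 0) * G l j x)"
      by (intro sum.cong refl) (simp add: l ij)
    also have "\<dots> = G i j x" using ij by (simp add: if01_mult mult_if01 sum.delta sum.delta')
    finally show ?thesis .
  qed
  have B: "(\<Sum>k<m. \<Sum>l<m. G i k y * (F k l x * G l j x)) = G i j y"
  proof -
    have "(\<Sum>k<m. \<Sum>l<m. G i k y * (F k l x * G l j x)) = (\<Sum>k<m. G i k y * (\<Sum>l<m. F k l x * G l j x))"
      by (simp add: sum_distrib_left)
    also have "\<dots> = (\<Sum>k<m. G i k y * (if k = j then 1 else 0))"
      by (intro sum.cong refl) (simp add: r ij)
    also have "\<dots> = G i j y" using ij by (simp add: if01_mult mult_if01 sum.delta sum.delta')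
    finally show ?thesis .
  qed
  have "(\<Sum>k<m. \<Sum>l<m. G i k y * ((F k l y - F k l x) * G l j x))
      = (\<Sum>k<m. \<Sum>l<m. G i k y * (F k l y * G l j x)) - (\<Sum>k<m. \<Sum>l<m. G i k y * (F k l x * G l j x))"
    by (simp add: algebra_simps sum_subtractf)
  then show ?thesis using A B by simp
qed

lemma C2_inverse:
  fixes F G :: "nat \<Rightarrow> nat \<Rightarrow> real ^ 'n \<Rightarrow> 'a::{banach, real_normed_algebra_1}"
  assumes F: "\<And>i j. i<m \<Longrightarrow> j<m \<Longrightarrow> C2_on S (F i j)"
    and r: "\<And>x i j. x\<in>S \<Longrightarrow> i<m \<Longrightarrow> j<m \<Longrightarrow> (\<Sum>k<m. F i k x * G k j x) = (if i=j then 1 else 0)"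
    and l: "\<And>x i j. x\<in>S \<Longrightarrow> i<m \<Longrightarrow> j<m \<Longrightarrow> (\<Sum>k<m. G i k x * F k j x) = (if i=j then 1 else 0)"
    and bnd: "\<And>x i j. x\<in>S \<Longrightarrow> i<m \<Longrightarrow> j<m \<Longrightarrow> norm (G i j x) \<le> C"
  shows "\<And>i j. i<m \<Longrightarrow> j<m \<Longrightarrow> C2_on S (G i j)"
proof -
  have "\<forall>p. \<exists>f'. fst p < m \<longrightarrow> snd p < m \<longrightarrow> C1w S (F (fst p) (snd p)) f' \<and> C1_on S f'"
  proof (intro allI)
    fix p
    show "\<exists>f'. fst p < m \<longrightarrow> snd p < m \<longrightarrow> C1w S (F (fst p) (snd p)) f' \<and> C1_on S f'"
    proof (cases "fst p < m \<and> snd p < m")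
      case True
      then have "C2_on S (F (fst p) (snd p))" using F by auto
      then obtain f' where "C1w S (F (fst p) (snd p)) f'" "C1_on S f'" by (rule C2_onE)
      then show ?thesis by blast
    qed auto
  qed
  from choice[OF this] obtain FF where FF0: "\<forall>p. fst p < m \<longrightarrow> snd p < m \<longrightarrow> C1w S (F (fst p) (snd p)) (FF p) \<and> C1_on S (FF p)"
    ..
  have FF: "C1w S (F (fst p) (snd p)) (FF p) \<and> C1_on S (FF p)" if "fst p < m" "snd p < m" for p
    using FF0 that by blast
  define F' where "F' = (\<lambda>k l. FF (k, l))"
  have F'1: "C1w S (F k l) (F' k l)" and F'2: "C1_on S (F' k l)" if "k < m" "l < m" for k l
    using FF[of "(k,l)"] that by (auto simp: F'_def)
  have ident: "G i j y = G i j x - (\<Sum>k<m. \<Sum>l<m. G i k y * ((F k l y - F k l x) * G l j x))"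
    if "x \<in> S" "y \<in> S" "i < m" "j < m" for x y i j
    by (rule inv_ident) (use that r l in auto)
  have Fc: "((\<lambda>y. F k l y) \<longlongrightarrow> F k l x) (at x within S)" if "x \<in> S" "k < m" "l < m" for x k l
    using C2_on_cont[OF F[OF that(2,3)]] that(1)
    by (simp add: continuous_on_eq_continuous_within continuous_within)
  have Gcont: "continuous (at x within S) (G i j)" if x: "x \<in> S" and ij: "i < m" "j < m" for x i j
  proof -
    have ev: "eventually (\<lambda>y. norm (G i j y - G i j x) \<le> (\<Sum>k<m. \<Sum>l<m. C * norm (F k l y - F k l x) * C)) (at x within S)"
    proof -
      have "norm (G i j y - G i j x) \<le> (\<Sum>k<m. \<Sum>l<m. C * norm (F k l y - F k l x) * C)" if y: "y \<in> S" for y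
      proof -
        have "norm (G i j y - G i j x) = norm (\<Sum>k<m. \<Sum>l<m. G i k y * ((F k l y - F k l x) * G l j x))"
          using ident[OF x y ij] by (simp add: norm_minus_commute)
        also have "\<dots> \<le> (\<Sum>k<m. norm (\<Sum>l<m. G i k y * ((F k l y - F k l x) * G l j x)))"
          by (rule norm_sum)
        also have "\<dots> \<le> (\<Sum>k<m. \<Sum>l<m. norm (G i k y * ((F k l y - F k l x) * G l j x)))"
          by (intro sum_mono norm_sum)
        also have "\<dots> \<le> (\<Sum>k<m. \<Sum>l<m. C * norm (F k l y - F k l x) * C)"
        proof (intro sum_mono)
          fix k l assume k: "k \<in> {..<m}" and l: "l \<in> {..<m}"
          have "norm (G i k y * ((F k l y - F k l x) * G l j x)) \<le> norm (G i k y) * (norm (F k l y - F k l x) * norm (G l j x))"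
            by (intro order_trans[OF norm_mult_ineq] mult_left_mono norm_mult_ineq norm_ge_zero)
          also have "\<dots> \<le> C * (norm (F k l y - F k l x) * C)"
            using bnd[OF y ij(1), of k] bnd[OF x, of l j] k l ij
            by (intro mult_mono) (auto intro: order_trans[OF norm_ge_zero])
          finally show "norm (G i k y * ((F k l y - F k l x) * G l j x)) \<le> C * norm (F k l y - F k l x) * C"
            by (simp add: mult.assoc)
        qed
        finally show ?thesis .
      qed
      then show ?thesis unfolding eventually_at_filter by (auto intro: always_eventually)
    qed
    have "((\<lambda>y. \<Sum>k<m. \<Sum>l<m. C * norm (F k l y - F k l x) * C) \<longlongrightarrow> (\<Sum>k<m. \<Sum>l<m. C * norm (F k l x - F k l x) * C)) (at x within S)"
      by (intro tendsto_intros Fc x) auto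
    then have "((\<lambda>y. \<Sum>k<m. \<Sum>l<m. C * norm (F k l y - F k l x) * C) \<longlongrightarrow> 0) (at x within S)"
      by simp
    from Lim_null_comparison[OF ev this] show ?thesis
      unfolding continuous_within by (simp add: LIM_zero_iff)
  qed
  have Gcon: "continuous_on S (G i j)" if "i < m" "j < m" for i j
    using Gcont that by (simp add: continuous_on_eq_continuous_within)
  define D where "D = (\<lambda>i j x. - (\<Sum>k<m. \<Sum>l<m. blinfun_mult_right (G i k x) o\<^sub>L (blinfun_mult_left (G l j x) o\<^sub>L F' k l x)))"
  have Dapp: "blinfun_apply (D i j x) h = - (\<Sum>k<m. \<Sum>l<m. G i k x * (F' k l x h * G l j x))" for i j x h
    by (simp add: D_def blinfun.sum_left blinfun.minus_left blinfun_mult_right.rep_eq)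
  have C1G: "C1w S (G i j) (D i j)" if ij: "i < m" "j < m" for i j
    unfolding C1w_def
  proof safe
    fix x assume x: "x \<in> S"
    have trm: "((\<lambda>y. G i k y * ((F k l y - F k l x) * G l j x)) has_derivative
                (\<lambda>h. G i k x * (F' k l x h * G l j x))) (at x within S)" if "k \<in> {..<m}" "l \<in> {..<m}" for k l
    proof (rule bilinear_zero_deriv[OF bounded_bilinear_mult])
      show "continuous (at x within S) (G i k)" using Gcont x ij that by auto
      have "(F k l has_derivative blinfun_apply (F' k l x)) (at x within S)"
        using F'1[of k l] that x unfolding C1w_def by auto
      then show "((\<lambda>y. (F k l y - F k l x) * G l j x) has_derivative (\<lambda>h. F' k l x h * G l j x)) (at x within S)"
        by (auto intro!: derivative_eq_intros)
    qed simp
    have "((\<lambda>y. G i j x - (\<Sum>k<m. \<Sum>l<m. G i k y * ((F k l y - F k l x) * G l j x))) has_derivative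
         (\<lambda>h. 0 - (\<Sum>k<m. \<Sum>l<m. G i k x * (F' k l x h * G l j x)))) (at x within S)"
      by (intro has_derivative_diff has_derivative_const has_derivative_sum trm)
    then have "(G i j has_derivative
         (\<lambda>h. 0 - (\<Sum>k<m. \<Sum>l<m. G i k x * (F' k l x h * G l j x)))) (at x within S)"
    proof (rule has_derivative_transform_within[where d = 1])
      fix x' assume "x' \<in> S"
      then show "G i j x - (\<Sum>k<m. \<Sum>l<m. G i k x' * ((F k l x' - F k l x) * G l j x)) = G i j x'"
        by (rule sym[OF ident[OF x _ ij]])
    qed (use x in auto)
    then show "(G i j has_derivative blinfun_apply (D i j x)) (at x within S)"
      by (rule has_derivative_eq_rhs) (simp add: Dapp fun_eq_iff)
  next
    show "continuous_on S (D i j)"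
      unfolding D_def
      using Gcon F'2[THEN C1_on_cont] ij
      by (intro continuous_on_minus continuous_on_sum bounded_bilinear.continuous_on[OF bounded_bilinear_blinfun_compose]
          bounded_linear.continuous_on[OF bounded_linear_blinfun_mult_right]
          bounded_linear.continuous_on[OF bounded_linear_blinfun_mult_left]) auto
  qed
  have C1G': "C1_on S (G i j)" if "i < m" "j < m" for i j using C1G[OF that] by (rule C1_onI)
  fix i j assume ij: "i < m" "j < m"
  have "C1_on S (D i j)"
    unfolding D_def using ij
    by (intro C1_on_neg C1_on_sum C1_on_bilinear[OF bounded_bilinear_blinfun_compose]
        C1_on_linear[OF bounded_linear_blinfun_mult_right] C1_on_linear[OF bounded_linear_blinfun_mult_left]
        C1G' F'2 finite_lessThan) auto
  then show "C2_on S (G i j)" by (rule C2_onI[OF C1G[OF ij]])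
qed

definition mmul :: "nat \<Rightarrow> (nat \<Rightarrow> nat \<Rightarrow> 'a::ring_1) \<Rightarrow> (nat \<Rightarrow> nat \<Rightarrow> 'a) \<Rightarrow> nat \<Rightarrow> nat \<Rightarrow> 'a" where
  "mmul m X Y = (\<lambda>i j. \<Sum>k<m. X i k * Y k j)"
definition mone :: "nat \<Rightarrow> nat \<Rightarrow> 'a::ring_1" where
  "mone = (\<lambda>i j. if i = j then 1 else 0)"
definition mN :: "nat \<Rightarrow> (nat \<Rightarrow> nat \<Rightarrow> 'a::real_normed_vector) \<Rightarrow> real" where
  "mN m X = (\<Sum>i<m. \<Sum>j<m. norm (X i j))"
primrec mpow :: "nat \<Rightarrow> (nat \<Rightarrow> nat \<Rightarrow> 'a::ring_1) \<Rightarrow> nat \<Rightarrow> nat \<Rightarrow> nat \<Rightarrow> 'a" where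
  "mpow m E 0 = mone"
| "mpow m E (Suc k) = mmul m E (mpow m E k)"

lemma mmul_assoc: "mmul m (mmul m X Y) Z i j = mmul m X (mmul m Y Z) i j"
  unfolding mmul_def
  by (simp add: sum_distrib_left sum_distrib_right mult.assoc) (rule sum.swap)

lemma mmul_one_left: "i < m \<Longrightarrow> mmul m mone X i j = X i j"
  unfolding mmul_def mone_def by (simp add: if01_mult sum.delta)

lemma mmul_one_right: "j < m \<Longrightarrow> mmul m X mone i j = X i j"
  unfolding mmul_def mone_def by (simp add: mult_if01 sum.delta')

lemma mmul_cong_right: "(\<And>k. k < m \<Longrightarrow> Y k j = Y' k j) \<Longrightarrow> mmul m X Y i j = mmul m X Y' i j"
  unfolding mmul_def by (intro sum.cong) auto

lemma mmul_cong_left: "(\<And>k. k < m \<Longrightarrow> X i k = X' i k) \<Longrightarrow> mmul m X Y i j = mmul m X' Y i j"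
  unfolding mmul_def by (intro sum.cong) auto

lemma mpow_comm: "i < m \<Longrightarrow> j < m \<Longrightarrow> mmul m (mpow m E k) E i j = mmul m E (mpow m E k) i j"
proof (induction k arbitrary: i j)
  case 0 then show ?case by (simp add: mmul_one_left mmul_one_right)
next
  case (Suc k)
  have "mmul m (mpow m E (Suc k)) E i j = mmul m E (mmul m (mpow m E k) E) i j"
    by (simp add: mmul_assoc)
  also have "\<dots> = mmul m E (mpow m E (Suc k)) i j"
    using Suc by (intro mmul_cong_right) simp
  finally show ?case .
qed

lemma entry_le_mN: "i < m \<Longrightarrow> j < m \<Longrightarrow> norm (X i j) \<le> mN m X"
proof -
  assume ij: "i < m" "j < m"
  have "norm (X i j) \<le> (\<Sum>j<m. norm (X i j))"
    using ij by (intro member_le_sum) auto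
  also have "\<dots> \<le> mN m X" unfolding mN_def
    using ij by (intro member_le_sum[where f = "\<lambda>i. \<Sum>j<m. norm (X i j)"]) (auto intro: sum_nonneg)
  finally show ?thesis .
qed

lemma mN_nonneg: "0 \<le> mN m X"
  unfolding mN_def by (intro sum_nonneg) auto

lemma mN_mmul: "mN m (mmul m (X :: nat \<Rightarrow> nat \<Rightarrow> 'a::real_normed_algebra_1) Y) \<le> mN m X * mN m Y"
proof -
  have "mN m (mmul m X Y) \<le> (\<Sum>i<m. \<Sum>j<m. \<Sum>k<m. norm (X i k) * norm (Y k j))"
    unfolding mN_def mmul_def
    by (intro sum_mono order_trans[OF norm_sum] norm_mult_ineq)
  also have "\<dots> = (\<Sum>i<m. \<Sum>k<m. norm (X i k) * (\<Sum>j<m. norm (Y k j)))"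
    by (simp add: sum_distrib_left) (intro sum.cong refl sum.swap)
  also have "\<dots> \<le> (\<Sum>i<m. \<Sum>k<m. norm (X i k) * mN m Y)"
  proof (intro sum_mono mult_left_mono)
    fix k assume "k \<in> {..<m}"
    then show "(\<Sum>j<m. norm (Y k j)) \<le> mN m Y" unfolding mN_def
      by (intro member_le_sum[where f = "\<lambda>i. \<Sum>j<m. norm (Y i j)"]) (auto intro: sum_nonneg)
  qed auto
  also have "\<dots> = mN m X * mN m Y"
    by (simp add: mN_def sum_distrib_right)
  finally show ?thesis .
qed

lemma mN_mone: "mN m (mone :: nat \<Rightarrow> nat \<Rightarrow> 'a::real_normed_algebra_1) = real m"
  unfolding mN_def mone_def by (simp add: if_distrib[of norm] sum.delta cong: if_cong)

lemma mN_mpow: "mN m (mpow m (E :: nat \<Rightarrow> nat \<Rightarrow> 'a::real_normed_algebra_1) k) \<le> real m * mN m E ^ k"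
proof (induction k)
  case 0 then show ?case by (simp add: mN_mone)
next
  case (Suc k)
  have "mN m (mpow m E (Suc k)) \<le> mN m E * mN m (mpow m E k)"
    by (simp add: mN_mmul)
  also have "\<dots> \<le> mN m E * (real m * mN m E ^ k)"
    by (intro mult_left_mono Suc mN_nonneg)
  finally show ?case by (simp add: algebra_simps)
qed

lemma neumann:
  fixes E :: "nat \<Rightarrow> nat \<Rightarrow> 'a::{banach, real_normed_algebra_1}"
  assumes q: "mN m E \<le> 1/2"
  shows "\<exists>G. (\<forall>i<m. \<forall>j<m. (\<Sum>k<m. (mone i k + E i k) * G k j) = mone i j \<and>
                          (\<Sum>k<m. G i k * (mone k j + E k j)) = mone i j \<and> norm (G i j) \<le> 2 * real m)"
proof -
  define P where "P = mpow m E"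
  define a where "a = (\<lambda>i j n. ((- 1) ^ n :: real) *\<^sub>R P n i j)"
  define G where "G = (\<lambda>i j. suminf (a i j))"
  have q0: "0 \<le> mN m E" by (rule mN_nonneg)
  have an: "norm (a i j n) \<le> real m * mN m E ^ n" if "i < m" "j < m" for i j n
    using entry_le_mN[OF that, of "P n"] mN_mpow[of m E n] by (simp add: a_def P_def)
  have sg: "summable (\<lambda>n. real m * mN m E ^ n)"
    using q q0 by (intro summable_mult summable_geometric) auto
  have sa: "summable (a i j)" if "i < m" "j < m" for i j
    by (rule summable_comparison_test'[OF sg an[OF that]])
  have sumg: "(\<Sum>n. real m * mN m E ^ n) \<le> 2 * real m"
  proof -
    have "(\<Sum>n. real m * mN m E ^ n) = real m * (1 / (1 - mN m E))"
      using q q0 by (subst suminf_mult[OF summable_geometric]) (auto simp: suminf_geometric)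
    also have "\<dots> \<le> real m * 2"
      using q q0 by (intro mult_left_mono) (auto simp: field_simps)
    finally show ?thesis by simp
  qed
  have Gb: "norm (G i j) \<le> 2 * real m" if "i < m" "j < m" for i j
    unfolding G_def using norm_suminf_le[OF an[OF that] sg] sumg by linarith
  have a0: "a i j 0 = mone i j" for i j by (simp add: a_def P_def)
  have tele: "G i j + (\<Sum>n. ((- 1) ^ n :: real) *\<^sub>R P (Suc n) i j) = mone i j" if "i < m" "j < m" for i j
  proof -
    have "(\<Sum>n. ((- 1) ^ n :: real) *\<^sub>R P (Suc n) i j) = - (\<Sum>n. a i j (Suc n))"
      using summable_ignore_initial_segment[OF sa[OF that], of 1]
      by (subst suminf_minus[symmetric]) (auto simp: a_def)
    also have "\<dots> = - (G i j - a i j 0)" unfolding G_def by (simp add: suminf_split_head[OF sa[OF that]])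
    finally show ?thesis by (simp add: a0)
  qed
  have sP: "summable (\<lambda>n. ((- 1) ^ n :: real) *\<^sub>R P (Suc n) i j)" if "i < m" "j < m" for i j
    using summable_ignore_initial_segment[OF sa[OF that], of 1]
    by (auto simp: a_def dest: summable_minus)
  show ?thesis
  proof (intro exI[of _ G] allI impI conjI)
    fix i j assume ij: "i < m" "j < m"
    show "norm (G i j) \<le> 2 * real m" by (rule Gb[OF ij])
    have "(\<Sum>k<m. (mone i k + E i k) * G k j) = G i j + (\<Sum>k<m. E i k * G k j)"
      using ij by (simp add: distrib_right sum.distrib mone_def if01_mult sum.delta)
    also have "(\<Sum>k<m. E i k * G k j) = (\<Sum>k<m. \<Sum>n. E i k * a k j n)"
      unfolding G_def using ij by (intro sum.cong refl suminf_mult[symmetric] sa) auto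
    also have "\<dots> = (\<Sum>n. \<Sum>k<m. E i k * a k j n)"
      using ij by (intro suminf_sum[symmetric] summable_mult sa) auto
    also have "\<dots> = (\<Sum>n. ((- 1) ^ n :: real) *\<^sub>R P (Suc n) i j)"
      by (simp add: a_def P_def mmul_def scaleR_sum_right mult_scaleR_right)
    finally show "(\<Sum>k<m. (mone i k + E i k) * G k j) = mone i j" using tele[OF ij] by simp
    have "(\<Sum>k<m. G i k * (mone k j + E k j)) = G i j + (\<Sum>k<m. G i k * E k j)"
      using ij by (simp add: distrib_left sum.distrib mone_def mult_if01 sum.delta')
    also have "(\<Sum>k<m. G i k * E k j) = (\<Sum>k<m. \<Sum>n. a i k n * E k j)"
      unfolding G_def using ij by (intro sum.cong refl suminf_mult2 sa) auto
    also have "\<dots> = (\<Sum>n. \<Sum>k<m. a i k n * E k j)"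
      using ij by (intro suminf_sum[symmetric] summable_mult2 sa) auto
    also have "\<dots> = (\<Sum>n. ((- 1) ^ n :: real) *\<^sub>R P (Suc n) i j)"
    proof (intro arg_cong[where f = suminf] ext)
      fix n
      have "(\<Sum>k<m. a i k n * E k j) = ((- 1) ^ n :: real) *\<^sub>R mmul m (P n) E i j"
        by (simp add: a_def mmul_def scaleR_sum_right mult_scaleR_left)
      also have "\<dots> = ((- 1) ^ n :: real) *\<^sub>R P (Suc n) i j"
        using mpow_comm[OF ij, of E n] by (simp add: P_def)
      finally show "(\<Sum>k<m. a i k n * E k j) = ((- 1) ^ n :: real) *\<^sub>R P (Suc n) i j" .
    qed
    finally show "(\<Sum>k<m. G i k * (mone k j + E k j)) = mone i j" using tele[OF ij] by simp
  qed
qed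

lemma simplex_scale: "x \<in> std_simplex \<Longrightarrow> 0 \<le> c \<Longrightarrow> c \<le> 1 \<Longrightarrow> c *\<^sub>R x \<in> std_simplex"
proof -
  assume x: "x \<in> std_simplex" and c: "0 \<le> c" "c \<le> 1"
  have nn: "\<forall>i. 0 \<le> x $ i" and s1: "(\<Sum>i\<in>UNIV. x $ i) \<le> 1" using x by (auto simp: std_simplex_def)
  have s0: "0 \<le> (\<Sum>i\<in>UNIV. x $ i)" using nn by (intro sum_nonneg) auto
  have "(\<Sum>i\<in>UNIV. (c *\<^sub>R x) $ i) = c * (\<Sum>i\<in>UNIV. x $ i)" by (simp add: sum_distrib_left)
  also have "\<dots> \<le> 1 * 1" using c s0 s1 by (intro mult_mono) auto
  finally show ?thesis using nn c by (auto simp: std_simplex_def)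
qed

lemma simplex_zero: "0 \<in> std_simplex"
  by (simp add: std_simplex_def)

lemma mmul_inv_prod:
  assumes AB: "\<And>i j. i<m \<Longrightarrow> j<m \<Longrightarrow> mmul m A B i j = mone i j"
    and CD: "\<And>i j. i<m \<Longrightarrow> j<m \<Longrightarrow> mmul m C D i j = mone i j"
    and ij: "i < m" "j < m"
  shows "mmul m (mmul m C A) (mmul m B D) i j = (mone i j :: 'a::ring_1)"
proof -
  have "mmul m (mmul m C A) (mmul m B D) i j = mmul m C (mmul m A (mmul m B D)) i j"
    by (rule mmul_assoc)
  also have "\<dots> = mmul m C (mmul m (mmul m A B) D) i j"
    by (intro mmul_cong_right mmul_assoc[symmetric])
  also have "\<dots> = mmul m C (mmul m mone D) i j"
    by (intro mmul_cong_right mmul_cong_left AB)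
  also have "\<dots> = mmul m C D i j"
    by (intro mmul_cong_right mmul_one_left)
  also have "\<dots> = mone i j" by (rule CD[OF ij])
  finally show ?thesis .
qed

lemma lift_step:
  fixes \<phi> :: "'a::{banach, real_normed_algebra_1} \<Rightarrow> 'b::{banach, real_normed_algebra_1}"
    and s :: "'b \<Rightarrow> 'a"
    and \<tau> \<rho> :: "nat \<Rightarrow> nat \<Rightarrow> real ^ 'n::finite \<Rightarrow> 'b"
    and \<sigma> :: "nat \<Rightarrow> nat \<Rightarrow> real ^ 'n \<Rightarrow> 'a"
  assumes phi_bl: "bounded_linear \<phi>"
    and phi_mult: "\<And>x y. \<phi> (x * y) = \<phi> x * \<phi> y"
    and phi_one: "\<phi> 1 = 1"
    and s_bl: "bounded_linear s"
    and s_section: "\<And>b. \<phi> (s b) = b"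
    and \<tau>C2: "\<And>i j. i<m \<Longrightarrow> j<m \<Longrightarrow> C2_on std_simplex (\<tau> i j)"
    and \<rho>C2: "\<And>i j. i<m \<Longrightarrow> j<m \<Longrightarrow> C2_on std_simplex (\<rho> i j)"
    and \<rho>\<tau>: "\<And>x i j. x \<in> std_simplex \<Longrightarrow> i<m \<Longrightarrow> j<m \<Longrightarrow> (\<Sum>k<m. \<rho> i k x * \<tau> k j x) = mone i j"
    and a: "0 \<le> a" "a \<le> 1" and b: "0 \<le> b" "b \<le> 1"
    and small: "\<And>x. x \<in> std_simplex \<Longrightarrow>
        mN m (\<lambda>i j. s (\<Sum>l<m. (\<tau> i l (a *\<^sub>R x) - \<tau> i l (b *\<^sub>R x)) * \<rho> l j (b *\<^sub>R x))) \<le> 1/2"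
    and \<sigma>: "\<sigma> \<in> GL0_C2 m"
    and \<sigma>\<phi>: "\<forall>i<m. \<forall>j<m. \<forall>x\<in>std_simplex. \<phi> (\<sigma> i j x) = \<tau> i j (b *\<^sub>R x)"
  shows "\<exists>\<sigma>'\<in>GL0_C2 m. \<forall>i<m. \<forall>j<m. \<forall>x\<in>std_simplex. \<phi> (\<sigma>' i j x) = \<tau> i j (a *\<^sub>R x)"
proof -
  let ?S = "std_simplex :: (real ^ 'n) set"
  interpret P: bounded_linear \<phi> by fact
  interpret Sl: bounded_linear s by fact
  obtain \<sigma>i where \<sigma>C2: "\<forall>i<m. \<forall>j<m. C2_on ?S (\<sigma> i j)"
    and \<sigma>0: "\<forall>i<m. \<forall>j<m. \<sigma> i j 0 = (if i = j then 1 else 0)"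
    and \<sigma>iC2: "\<forall>i<m. \<forall>j<m. C2_on ?S (\<sigma>i i j)"
    and \<sigma>inv: "\<forall>x\<in>?S. \<forall>i<m. \<forall>j<m. (\<Sum>k<m. \<sigma> i k x * \<sigma>i k j x) = (if i = j then 1 else 0) \<and>
                 (\<Sum>k<m. \<sigma>i i k x * \<sigma> k j x) = (if i = j then 1 else 0)"
    using \<sigma> unfolding GL0_C2_def by (elim CollectE conjE exE) (rule that)
  have Sa: "a *\<^sub>R x \<in> ?S" and Sb: "b *\<^sub>R x \<in> ?S" if "x \<in> ?S" for x
    using simplex_scale[OF that] a b by auto
  define E where "E = (\<lambda>i j x. s (\<Sum>l<m. (\<tau> i l (a *\<^sub>R x) - \<tau> i l (b *\<^sub>R x)) * \<rho> l j (b *\<^sub>R x)))"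
  define F where "F = (\<lambda>i j x. mone i j + E i j x)"
  have EC2: "C2_on ?S (E i j)" if ij: "i < m" "j < m" for i j
  proof -
    have "C2_on ?S (\<lambda>x. (\<tau> i l (a *\<^sub>R x) - \<tau> i l (b *\<^sub>R x)) * \<rho> l j (b *\<^sub>R x))" if l: "l \<in> {..<m}" for l
    proof -
      have 1: "C2_on ?S (\<lambda>x. \<tau> i l (a *\<^sub>R x))" using l ij by (intro C2_on_scale_compose[OF \<tau>C2 Sa]) auto
      have 2: "C2_on ?S (\<lambda>x. \<tau> i l (b *\<^sub>R x))" using l ij by (intro C2_on_scale_compose[OF \<tau>C2 Sb]) auto
      have 3: "C2_on ?S (\<lambda>x. \<rho> l j (b *\<^sub>R x))" using l ij by (intro C2_on_scale_compose[OF \<rho>C2 Sb]) auto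
      show ?thesis by (rule C2_on_mult[OF C2_on_diff[OF 1 2] 3])
    qed
    then have "C2_on ?S (\<lambda>x. \<Sum>l<m. (\<tau> i l (a *\<^sub>R x) - \<tau> i l (b *\<^sub>R x)) * \<rho> l j (b *\<^sub>R x))"
      by (rule C2_on_sum[OF finite_lessThan])
    then show ?thesis unfolding E_def by (rule C2_on_linear[OF s_bl])
  qed
  have FC2: "C2_on ?S (F i j)" if "i < m" "j < m" for i j
    unfolding F_def by (rule C2_on_add[OF C2_on_const EC2[OF that]])
  define PG where "PG = (\<lambda>x G. \<forall>i<m. \<forall>j<m. (\<Sum>k<m. (mone i k + E i k x) * G k j) = mone i j \<and>
                          (\<Sum>k<m. G i k * (mone k j + E k j x)) = (mone i j :: 'a) \<and> norm (G i j) \<le> 2 * real m)"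
  define G where "G = (\<lambda>i j x. (SOME G. PG x G) i j)"
  have GP: "PG x (\<lambda>i j. G i j x)" if "x \<in> ?S" for x
  proof -
    have "\<exists>G. PG x G" unfolding PG_def E_def by (rule neumann[OF small[OF that]])
    then show ?thesis unfolding G_def by (rule someI_ex)
  qed
  have GC2: "C2_on ?S (G i j)" if "i < m" "j < m" for i j
  proof (rule C2_inverse[of m ?S F G "2 * real m", OF FC2 _ _ _ that])
    show "\<And>x i j. x \<in> ?S \<Longrightarrow> i < m \<Longrightarrow> j < m \<Longrightarrow> (\<Sum>k<m. F i k x * G k j x) = (if i = j then 1 else 0)"
      using GP unfolding PG_def F_def mone_def by simp
    show "\<And>x i j. x \<in> ?S \<Longrightarrow> i < m \<Longrightarrow> j < m \<Longrightarrow> (\<Sum>k<m. G i k x * F k j x) = (if i = j then 1 else 0)"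
      using GP unfolding PG_def F_def mone_def by simp
    show "\<And>x i j. x \<in> ?S \<Longrightarrow> i < m \<Longrightarrow> j < m \<Longrightarrow> norm (G i j x) \<le> 2 * real m"
      using GP unfolding PG_def by simp
  qed
  define \<sigma>' where "\<sigma>' = (\<lambda>i j x. \<Sum>k<m. F i k x * \<sigma> k j x)"
  define \<sigma>i' where "\<sigma>i' = (\<lambda>i j x. \<Sum>k<m. \<sigma>i i k x * G k j x)"
  show ?thesis
  proof (rule bexI[of _ \<sigma>'])
    show "\<forall>i<m. \<forall>j<m. \<forall>x\<in>?S. \<phi> (\<sigma>' i j x) = \<tau> i j (a *\<^sub>R x)"
    proof (intro allI impI ballI)
      fix i j x assume i: "i < m" and j: "j < m" and x: "x \<in> ?S"
      define D where "D = (\<lambda>l. \<tau> i l (a *\<^sub>R x) - \<tau> i l (b *\<^sub>R x))"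
      have pm: "\<phi> (mone i k) = mone i k" for k by (simp add: mone_def phi_one P.zero)
      have Fphi: "\<phi> (F i k x) = mone i k + (\<Sum>l<m. D l * \<rho> l k (b *\<^sub>R x))" for k
        by (simp add: F_def E_def P.add s_section pm D_def)
      have "\<phi> (\<sigma>' i j x) = (\<Sum>k<m. \<phi> (F i k x) * \<phi> (\<sigma> k j x))"
        by (simp add: \<sigma>'_def P.sum phi_mult)
      also have "\<dots> = (\<Sum>k<m. (mone i k + (\<Sum>l<m. D l * \<rho> l k (b *\<^sub>R x))) * \<tau> k j (b *\<^sub>R x))"
        using \<sigma>\<phi> j x by (intro sum.cong refl) (simp add: Fphi)
      also have "\<dots> = \<tau> i j (b *\<^sub>R x) + (\<Sum>k<m. \<Sum>l<m. D l * \<rho> l k (b *\<^sub>R x) * \<tau> k j (b *\<^sub>R x))"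
        using i by (simp add: distrib_right sum.distrib mone_def if01_mult sum.delta sum_distrib_right)
      also have "(\<Sum>k<m. \<Sum>l<m. D l * \<rho> l k (b *\<^sub>R x) * \<tau> k j (b *\<^sub>R x))
          = (\<Sum>l<m. D l * (\<Sum>k<m. \<rho> l k (b *\<^sub>R x) * \<tau> k j (b *\<^sub>R x)))"
        by (subst sum.swap) (simp add: sum_distrib_left mult.assoc)
      also have "\<dots> = (\<Sum>l<m. D l * mone l j)"
        using \<rho>\<tau>[OF Sb[OF x] _ j] by (intro sum.cong refl) simp
      also have "\<dots> = D j" using j by (simp add: mone_def mult_if01 sum.delta')
      finally show "\<phi> (\<sigma>' i j x) = \<tau> i j (a *\<^sub>R x)" by (simp add: D_def)
    qed
    have c1: "\<forall>i<m. \<forall>j<m. C2_on ?S (\<sigma>' i j)"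
    proof (intro allI impI)
      fix i j assume ij: "i < m" "j < m"
      have "C2_on ?S (\<lambda>x. F i k x * \<sigma> k j x)" if "k \<in> {..<m}" for k
        using that ij \<sigma>C2 by (intro C2_on_mult FC2) auto
      then show "C2_on ?S (\<sigma>' i j)" unfolding \<sigma>'_def by (rule C2_on_sum[OF finite_lessThan])
    qed
    have c3: "\<forall>i<m. \<forall>j<m. C2_on ?S (\<sigma>i' i j)"
    proof (intro allI impI)
      fix i j assume ij: "i < m" "j < m"
      have "C2_on ?S (\<lambda>x. \<sigma>i i k x * G k j x)" if "k \<in> {..<m}" for k
        using that ij \<sigma>iC2 by (intro C2_on_mult GC2) auto
      then show "C2_on ?S (\<sigma>i' i j)" unfolding \<sigma>i'_def by (rule C2_on_sum[OF finite_lessThan])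
    qed
    have c2: "\<forall>i<m. \<forall>j<m. \<sigma>' i j 0 = (if i = j then 1 else 0)"
    proof (intro allI impI)
      fix i j assume ij: "i < m" "j < m"
      have "F i k 0 = mone i k" for k by (simp add: F_def E_def Sl.zero)
      then have "\<sigma>' i j 0 = (\<Sum>k<m. mone i k * \<sigma> k j 0)" by (simp add: \<sigma>'_def)
      also have "\<dots> = \<sigma> i j 0" using ij by (simp add: mone_def if01_mult sum.delta)
      finally show "\<sigma>' i j 0 = (if i = j then 1 else 0)" using \<sigma>0 ij by simp
    qed
    have c4: "\<forall>x\<in>?S. \<forall>i<m. \<forall>j<m. (\<Sum>k<m. \<sigma>' i k x * \<sigma>i' k j x) = (if i = j then 1 else 0) \<and>
                 (\<Sum>k<m. \<sigma>i' i k x * \<sigma>' k j x) = (if i = j then 1 else 0)"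
    proof (intro ballI allI impI conjI)
      fix x i j assume x: "x \<in> ?S" and ij: "i < m" "j < m"
      let ?F = "\<lambda>i j. F i j x" and ?G = "\<lambda>i j. G i j x" and ?s = "\<lambda>i j. \<sigma> i j x" and ?si = "\<lambda>i j. \<sigma>i i j x"
      have FG: "mmul m ?F ?G i j = mone i j" "mmul m ?G ?F i j = mone i j" if "i < m" "j < m" for i j
        using GP[OF x] that unfolding PG_def by (auto simp: mmul_def F_def)
      have ss: "mmul m ?s ?si i j = mone i j" "mmul m ?si ?s i j = mone i j" if "i < m" "j < m" for i j
        using \<sigma>inv x that by (auto simp: mmul_def mone_def)
      have "(\<Sum>k<m. \<sigma>' i k x * \<sigma>i' k j x) = mmul m (mmul m ?F ?s) (mmul m ?si ?G) i j"
        by (simp add: mmul_def \<sigma>'_def \<sigma>i'_def)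
      also have "\<dots> = mone i j" by (rule mmul_inv_prod[OF ss(1) FG(1) ij])
      finally show "(\<Sum>k<m. \<sigma>' i k x * \<sigma>i' k j x) = (if i = j then 1 else 0)" by (simp add: mone_def)
      have "(\<Sum>k<m. \<sigma>i' i k x * \<sigma>' k j x) = mmul m (mmul m ?si ?G) (mmul m ?F ?s) i j"
        by (simp add: mmul_def \<sigma>'_def \<sigma>i'_def)
      also have "\<dots> = mone i j" by (rule mmul_inv_prod[OF FG(2) ss(2) ij])
      finally show "(\<Sum>k<m. \<sigma>i' i k x * \<sigma>' k j x) = (if i = j then 1 else 0)" by (simp add: mone_def)
    qed
    show "\<sigma>' \<in> GL0_C2 m"
      unfolding GL0_C2_def mem_Collect_eq by (intro conjI c1 c2 exI[of _ \<sigma>i'] c3 c4)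
  qed
qed

lemma compact_simplex: "compact (std_simplex :: (real ^ 'n::finite) set)"
proof -
  have cl: "closed (std_simplex :: (real ^ 'n) set)"
    unfolding std_simplex_def
    by (intro closed_Collect_conj closed_Collect_all closed_Collect_le continuous_intros)
  have "std_simplex \<subseteq> cbox (0 :: real ^ 'n) 1"
  proof
    fix x :: "real ^ 'n" assume x: "x \<in> std_simplex"
    have nn: "\<forall>i. 0 \<le> x $ i" and s1: "(\<Sum>i\<in>UNIV. x $ i) \<le> 1" using x by (auto simp: std_simplex_def)
    have "x $ i \<le> 1" for i
    proof -
      have "x $ i \<le> (\<Sum>i\<in>UNIV. x $ i)" using nn by (intro member_le_sum) auto
      then show ?thesis using s1 by simp
    qed
    then show "x \<in> cbox 0 1" using nn by (auto simp: mem_box_cart)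
  qed
  then have "bounded (std_simplex :: (real ^ 'n) set)" by (rule bounded_subset[OF bounded_cbox])
  with cl show ?thesis by (simp add: compact_eq_bounded_closed)
qed

lemma finite_delta:
  fixes S :: "'v::metric_space set"
  assumes "finite I" and "\<And>i. i \<in> I \<Longrightarrow> \<exists>d>0. \<forall>x\<in>S. \<forall>y\<in>S. dist x y < d \<longrightarrow> Q i x y"
  shows "\<exists>d>0. \<forall>i\<in>I. \<forall>x\<in>S. \<forall>y\<in>S. dist x y < d \<longrightarrow> Q i x y"
  using assms
proof (induction I rule: finite_induct)
  case empty then show ?case by (intro exI[of _ 1]) auto
next
  case (insert a I)
  obtain d1 where d1: "d1 > 0" "\<forall>x\<in>S. \<forall>y\<in>S. dist x y < d1 \<longrightarrow> Q a x y" using insert.prems by blast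
  obtain d2 where d2: "d2 > 0" "\<forall>i\<in>I. \<forall>x\<in>S. \<forall>y\<in>S. dist x y < d2 \<longrightarrow> Q i x y" using insert by blast
  show ?case using d1 d2 by (intro exI[of _ "min d1 d2"]) auto
qed

lemma small_bound:
  fixes s :: "'b::real_normed_algebra \<Rightarrow> 'a::real_normed_vector"
  assumes Ks: "\<And>y. norm (s y) \<le> norm y * Ks" "0 \<le> Ks"
    and R: "\<And>l j. l<m \<Longrightarrow> j<m \<Longrightarrow> norm (r l j) \<le> R" "0 \<le> R"
    and d: "\<And>i l. i<m \<Longrightarrow> l<m \<Longrightarrow> norm (d i l) \<le> \<epsilon>"
    and eps: "real m ^ 3 * Ks * R * \<epsilon> \<le> 1/2" "0 \<le> \<epsilon>"
  shows "mN m (\<lambda>i j. s (\<Sum>l<m. d i l * r l j)) \<le> 1/2"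
proof -
  have e: "norm (s (\<Sum>l<m. d i l * r l j)) \<le> real m * (\<epsilon> * R) * Ks" if "i < m" "j < m" for i j
  proof -
    have "norm (\<Sum>l<m. d i l * r l j) \<le> (\<Sum>l<m. norm (d i l * r l j))" by (rule norm_sum)
    also have "\<dots> \<le> (\<Sum>l<m. \<epsilon> * R)"
      using that eps(2) by (intro sum_mono order_trans[OF norm_mult_ineq] mult_mono d R) auto
    also have "\<dots> = real m * (\<epsilon> * R)" by simp
    finally have "norm (\<Sum>l<m. d i l * r l j) \<le> real m * (\<epsilon> * R)" .
    then show ?thesis using Ks(2) by (intro order_trans[OF Ks(1)] mult_right_mono) auto
  qed
  have "mN m (\<lambda>i j. s (\<Sum>l<m. d i l * r l j)) \<le> (\<Sum>i<m. \<Sum>j<m. real m * (\<epsilon> * R) * Ks)"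
    unfolding mN_def using e by (intro sum_mono) auto
  also have "\<dots> = real m ^ 3 * Ks * R * \<epsilon>" by (simp add: power3_eq_cube)
  finally show ?thesis using eps by linarith
qed

theorem mainTheorem5:
  fixes \<phi> :: "'a::{banach, real_normed_algebra_1} \<Rightarrow> 'b::{banach, real_normed_algebra_1}"
    and s :: "'b \<Rightarrow> 'a"
  assumes phi_bl: "bounded_linear \<phi>"
    and phi_mult: "\<And>x y. \<phi> (x * y) = \<phi> x * \<phi> y"
    and phi_one: "\<phi> 1 = 1"
    and s_bl: "bounded_linear s"
    and s_section: "\<And>b. \<phi> (s b) = b"
  shows "\<forall>m. \<forall>\<tau> \<in> (GL0_C2 m :: (nat \<Rightarrow> nat \<Rightarrow> real ^ 'n::finite \<Rightarrow> 'b) set).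
           \<exists>\<sigma> \<in> (GL0_C2 m :: (nat \<Rightarrow> nat \<Rightarrow> real ^ 'n \<Rightarrow> 'a) set).
             \<forall>i<m. \<forall>j<m. \<forall>x\<in>(std_simplex :: (real ^ 'n) set). \<phi> (\<sigma> i j x) = \<tau> i j x"
proof (intro allI ballI)
  fix m and \<tau> :: "nat \<Rightarrow> nat \<Rightarrow> real ^ 'n \<Rightarrow> 'b"
  assume \<tau>: "\<tau> \<in> GL0_C2 m"
  let ?S = "std_simplex :: (real ^ 'n) set"
  interpret P: bounded_linear \<phi> by fact
  interpret Sl: bounded_linear s by fact
  obtain \<rho> where \<tau>C2: "\<forall>i<m. \<forall>j<m. C2_on ?S (\<tau> i j)"
    and \<tau>0: "\<forall>i<m. \<forall>j<m. \<tau> i j 0 = (if i = j then 1 else 0)"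
    and \<rho>C2: "\<forall>i<m. \<forall>j<m. C2_on ?S (\<rho> i j)"
    and \<tau>inv: "\<forall>x\<in>?S. \<forall>i<m. \<forall>j<m. (\<Sum>k<m. \<tau> i k x * \<rho> k j x) = (if i = j then 1 else 0) \<and>
                 (\<Sum>k<m. \<rho> i k x * \<tau> k j x) = (if i = j then 1 else 0)"
    using \<tau> unfolding GL0_C2_def by (elim CollectE conjE exE) (rule that)
  have \<rho>\<tau>: "(\<Sum>k<m. \<rho> i k x * \<tau> k j x) = mone i j" if "x \<in> ?S" "i < m" "j < m" for x i j
    using \<tau>inv that by (simp add: mone_def)
  have cS: "compact ?S" by (rule compact_simplex)
  obtain M where M: "\<And>x. x \<in> ?S \<Longrightarrow> norm x \<le> M"
    using compact_imp_bounded[OF cS] unfolding bounded_iff by blast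
  have M0: "0 \<le> M" using M[OF simplex_zero] by simp
  have cPhi: "continuous_on ?S (\<lambda>x. mN m (\<lambda>l j. \<rho> l j x))"
    unfolding mN_def using \<rho>C2 by (intro continuous_on_sum continuous_on_norm C2_on_cont) auto
  obtain R0 where R0: "\<And>x. x \<in> ?S \<Longrightarrow> norm (mN m (\<lambda>l j. \<rho> l j x)) \<le> R0"
    using compact_imp_bounded[OF compact_continuous_image[OF cPhi cS]] unfolding bounded_iff by blast
  define R where "R = max R0 0"
  have R: "norm (\<rho> l j x) \<le> R" if "x \<in> ?S" "l < m" "j < m" for x l j
    using entry_le_mN[OF that(2,3), of "\<lambda>l j. \<rho> l j x"] R0[OF that(1)] by (simp add: R_def)
  have R00: "0 \<le> R" by (simp add: R_def)
  obtain Ks where Ks: "\<And>y. norm (s y) \<le> norm y * Ks" and Ks0: "0 < Ks"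
    using Sl.pos_bounded by blast
  define \<epsilon> where "\<epsilon> = 1 / (2 * (real m ^ 3 * Ks * R + 1))"
  have X0: "0 \<le> real m ^ 3 * Ks * R" using Ks0 R00 by simp
  have eps0: "0 < \<epsilon>" unfolding \<epsilon>_def using X0 by simp
  have eps: "real m ^ 3 * Ks * R * \<epsilon> \<le> 1/2"
  proof -
    have "real m ^ 3 * Ks * R * \<epsilon> = (real m ^ 3 * Ks * R) / (2 * (real m ^ 3 * Ks * R + 1))"
      by (simp add: \<epsilon>_def)
    also have "\<dots> \<le> 1/2" using X0 by (simp add: field_simps)
    finally show ?thesis .
  qed
  have "\<exists>d>0. \<forall>p\<in>{..<m} \<times> {..<m}. \<forall>x\<in>?S. \<forall>y\<in>?S. dist x y < d \<longrightarrow> dist (\<tau> (fst p) (snd p) x) (\<tau> (fst p) (snd p) y) < \<epsilon>"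
  proof (rule finite_delta)
    fix p assume p: "p \<in> {..<m} \<times> {..<m}"
    have "uniformly_continuous_on ?S (\<tau> (fst p) (snd p))"
      using p \<tau>C2 by (intro compact_uniformly_continuous C2_on_cont cS) auto
    then obtain d where "d > 0" "\<forall>x\<in>?S. \<forall>x'\<in>?S. dist x' x < d \<longrightarrow> dist (\<tau> (fst p) (snd p) x') (\<tau> (fst p) (snd p) x) < \<epsilon>"
      unfolding uniformly_continuous_on_def using eps0 by blast
    then show "\<exists>d>0. \<forall>x\<in>?S. \<forall>y\<in>?S. dist x y < d \<longrightarrow> dist (\<tau> (fst p) (snd p) x) (\<tau> (fst p) (snd p) y) < \<epsilon>"
      by blast
  qed auto
  then obtain \<delta> where \<delta>0: "\<delta> > 0"
    and \<delta>: "\<And>i l x y. i < m \<Longrightarrow> l < m \<Longrightarrow> x \<in> ?S \<Longrightarrow> y \<in> ?S \<Longrightarrow> dist x y < \<delta> \<Longrightarrow> dist (\<tau> i l x) (\<tau> i l y) < \<epsilon>"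
    by fastforce
  define N where "N = nat \<lceil>M / \<delta>\<rceil> + 1"
  have N0: "0 < N" by (simp add: N_def)
  have MN: "M / real N < \<delta>"
  proof -
    have "M / \<delta> < real N" unfolding N_def by linarith
    then have "M < real N * \<delta>" using \<delta>0 by (simp add: field_simps)
    then show ?thesis using N0 by (simp add: field_simps)
  qed
  define t where "t = (\<lambda>k::nat. real k / real N)"
  have ind: "k \<le> N \<longrightarrow> (\<exists>\<sigma> \<in> (GL0_C2 m :: (nat \<Rightarrow> nat \<Rightarrow> real ^ 'n \<Rightarrow> 'a) set).
             \<forall>i<m. \<forall>j<m. \<forall>x\<in>?S. \<phi> (\<sigma> i j x) = \<tau> i j (t k *\<^sub>R x))" for k
  proof (induction k)
    case 0
    have mem: "(\<lambda>i j x. mone i j) \<in> (GL0_C2 m :: (nat \<Rightarrow> nat \<Rightarrow> real ^ 'n \<Rightarrow> 'a) set)"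
      unfolding GL0_C2_def mem_Collect_eq
      by (intro conjI exI[of _ "\<lambda>i j x. mone i j"] allI impI ballI C2_on_const)
         (auto simp: mone_def if01_mult sum.delta)
    show ?case
    proof (intro impI bexI[OF _ mem] allI ballI)
      fix i j x assume "i < m" "j < m"
      then show "\<phi> (mone i j) = \<tau> i j (t 0 *\<^sub>R x)" using \<tau>0 by (simp add: t_def mone_def phi_one P.zero)
    qed
  next
    case (Suc k)
    show ?case
    proof
      assume k: "Suc k \<le> N"
      then obtain \<sigma> where \<sigma>: "\<sigma> \<in> (GL0_C2 m :: (nat \<Rightarrow> nat \<Rightarrow> real ^ 'n \<Rightarrow> 'a) set)"
        and \<sigma>\<phi>: "\<forall>i<m. \<forall>j<m. \<forall>x\<in>?S. \<phi> (\<sigma> i j x) = \<tau> i j (t k *\<^sub>R x)" using Suc by auto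
      have a: "0 \<le> t (Suc k)" "t (Suc k) \<le> 1" and b: "0 \<le> t k" "t k \<le> 1"
        using k N0 by (auto simp: t_def field_simps)
      have small: "mN m (\<lambda>i j. s (\<Sum>l<m. (\<tau> i l (t (Suc k) *\<^sub>R x) - \<tau> i l (t k *\<^sub>R x)) * \<rho> l j (t k *\<^sub>R x))) \<le> 1/2"
        if x: "x \<in> ?S" for x
      proof (rule small_bound[OF Ks _ _ R00 _ eps])
        show "0 \<le> Ks" using Ks0 by simp
        show "0 \<le> \<epsilon>" using eps0 by simp
        show "\<And>l j. l < m \<Longrightarrow> j < m \<Longrightarrow> norm (\<rho> l j (t k *\<^sub>R x)) \<le> R"
          using R simplex_scale[OF x b] by auto
        fix i l assume il: "i < m" "l < m"
        have xa: "t (Suc k) *\<^sub>R x \<in> ?S" and xb: "t k *\<^sub>R x \<in> ?S"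
          using simplex_scale[OF x a] simplex_scale[OF x b] by auto
        have "dist (t (Suc k) *\<^sub>R x) (t k *\<^sub>R x) = norm x / real N"
          by (simp add: dist_norm t_def scaleR_diff_left[symmetric] diff_divide_distrib[symmetric])
        also have "\<dots> \<le> M / real N" using M[OF x] N0 by (simp add: divide_right_mono)
        also have "\<dots> < \<delta>" by (rule MN)
        finally have "dist (\<tau> i l (t (Suc k) *\<^sub>R x)) (\<tau> i l (t k *\<^sub>R x)) < \<epsilon>"
          by (rule \<delta>[OF il xa xb])
        then show "norm (\<tau> i l (t (Suc k) *\<^sub>R x) - \<tau> i l (t k *\<^sub>R x)) \<le> \<epsilon>"
          by (simp add: dist_norm)
      qed
      show "\<exists>\<sigma> \<in> (GL0_C2 m :: (nat \<Rightarrow> nat \<Rightarrow> real ^ 'n \<Rightarrow> 'a) set).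
             \<forall>i<m. \<forall>j<m. \<forall>x\<in>?S. \<phi> (\<sigma> i j x) = \<tau> i j (t (Suc k) *\<^sub>R x)"
        by (rule lift_step[OF phi_bl phi_mult phi_one s_bl s_section _ _ \<rho>\<tau> a b small \<sigma> \<sigma>\<phi>])
           (use \<tau>C2 \<rho>C2 in auto)
    qed
  qed
  obtain \<sigma> where "\<sigma> \<in> (GL0_C2 m :: (nat \<Rightarrow> nat \<Rightarrow> real ^ 'n \<Rightarrow> 'a) set)"
    and "\<forall>i<m. \<forall>j<m. \<forall>x\<in>?S. \<phi> (\<sigma> i j x) = \<tau> i j (t N *\<^sub>R x)"
    using ind[of N] by auto
  moreover have "t N = 1" using N0 by (simp add: t_def)
  ultimately show "\<exists>\<sigma> \<in> (GL0_C2 m :: (nat \<Rightarrow> nat \<Rightarrow> real ^ 'n \<Rightarrow> 'a) set).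
             \<forall>i<m. \<forall>j<m. \<forall>x\<in>?S. \<phi> (\<sigma> i j x) = \<tau> i j x" by auto
qed

end
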